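(* Let $P$ be a finite point set in general position. Every cut vertex of $G_\bigtriangledown(P)$ lies on the boundary of the outer (unbounded) face of the straight-line plane embedding of $G_\bigtriangledown(P)$.
   Context: A finite point set $P$ in the plane is in general position if no line through two points of $P$ makes an angle of $0^\circ$, $60^\circ$ or $120^\circ$ with the horizontal. A down-triangle is an equilateral triangle with one side parallel to the $x$-axis and the corner opposite to this side below that side. $G_\bigtriangledown(P)$ is the graph with vertex set $P$ in which $p,q$ are adjacent iff some (closed) down-triangle contains $p$ and $q$ and no other point of $P$. Drawing each edge $pq$ as the straight segment $pq$ gives a plane embedding of $G_\bigtriangledown(P)$. *)

theory Defs
  imports "HOL-Analysis.Analysis"
begin

type_synonym pt = "real \<times> real"

definition general_position :: "pt set \<Rightarrow> bool" where
  "general_position P \<longleftrightarrow>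
     (\<forall>p\<in>P. \<forall>q\<in>P. p \<noteq> q \<longrightarrow>
        snd q - snd p \<noteq> 0 \<and>
        snd q - snd p \<noteq> sqrt 3 * (fst q - fst p) \<and>
        snd q - snd p \<noteq> - sqrt 3 * (fst q - fst p))"

definition down_triangle :: "pt set \<Rightarrow> bool" where
  "down_triangle T \<longleftrightarrow>
     (\<exists>a b s. s > 0 \<and>
        T = convex hull {(a, b), (a - s/2, b + s * sqrt 3 / 2), (a + s/2, b + s * sqrt 3 / 2)})"

definition tri_adj :: "pt set \<Rightarrow> pt \<Rightarrow> pt \<Rightarrow> bool" where
  "tri_adj P p q \<longleftrightarrow> p \<in> P \<and> q \<in> P \<and> p \<noteq> q \<and>
     (\<exists>T. down_triangle T \<and> T \<inter> P = {p, q})"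

definition reach :: "('a \<Rightarrow> 'a \<Rightarrow> bool) \<Rightarrow> 'a set \<Rightarrow> 'a \<Rightarrow> 'a \<Rightarrow> bool" where
  "reach E V = (\<lambda>u w. u \<in> V \<and> w \<in> V \<and> E u w)\<^sup>*\<^sup>*"

definition num_components :: "('a \<Rightarrow> 'a \<Rightarrow> bool) \<Rightarrow> 'a set \<Rightarrow> nat" where
  "num_components E V = card ((\<lambda>v. {w \<in> V. reach E V v w}) ` V)"

definition cut_vertex :: "('a \<Rightarrow> 'a \<Rightarrow> bool) \<Rightarrow> 'a set \<Rightarrow> 'a \<Rightarrow> bool" where
  "cut_vertex E V v \<longleftrightarrow> v \<in> V \<and> num_components E (V - {v}) > num_components E V"

definition tri_drawing :: "pt set \<Rightarrow> pt set" where
  "tri_drawing P = P \<union> \<Union>{closed_segment p q | p q. tri_adj P p q}"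

definition outer_face :: "pt set \<Rightarrow> pt set" where
  "outer_face P = outside (tri_drawing P)"

end

theory Submission
  imports Defs
begin


locale tg =
  fixes Q :: "'a set" and F :: "nat \<Rightarrow> 'a \<Rightarrow> real"
  assumes finQ: "finite Q"
    and sum0: "\<And>x. F 0 x + F 1 x + F 2 x = 0"
    and gp: "\<And>x y l. x \<in> Q \<Longrightarrow> y \<in> Q \<Longrightarrow> x \<noteq> y \<Longrightarrow> l < 3 \<Longrightarrow> F l x \<noteq> F l y"
begin

definition box :: "(nat \<Rightarrow> real) \<Rightarrow> 'a set" where
  "box c = {x\<in>Q. \<forall>l<3. c l \<le> F l x}"

definition adj :: "'a \<Rightarrow> 'a \<Rightarrow> bool" where
  "adj a b \<longleftrightarrow> a \<in> Q \<and> b \<in> Q \<and> a \<noteq> b \<and> (\<exists>c. box c = {a,b})"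

definition mm :: "'a \<Rightarrow> 'a \<Rightarrow> nat \<Rightarrow> real" where
  "mm a b = (\<lambda>l. min (F l a) (F l b))"

definition conn :: "'a \<Rightarrow> 'a \<Rightarrow> 'a \<Rightarrow> bool" where
  "conn v = (\<lambda>x y. x \<in> Q - {v} \<and> y \<in> Q - {v} \<and> adj x y)\<^sup>*\<^sup>*"

lemma lt3: "l < (3::nat) \<Longrightarrow> l = 0 \<or> l = 1 \<or> l = 2" by auto

lemma sum3:
  assumes "i<3" "j<3" "k<3" "i\<noteq>j" "i\<noteq>k" "j\<noteq>k"
  shows "F i x + F j x + F k x = 0"
  using sum0[of x] lt3[OF assms(1)] lt3[OF assms(2)] lt3[OF assms(3)] assms(4-6) by auto

lemma box_ijk:
  assumes "i<3" "j<3" "k<3" "i\<noteq>j" "i\<noteq>k" "j\<noteq>k"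
  shows "x \<in> box c \<longleftrightarrow> x \<in> Q \<and> c i \<le> F i x \<and> c j \<le> F j x \<and> c k \<le> F k x"
proof -
  have "\<And>l. l < 3 \<Longrightarrow> l = i \<or> l = j \<or> l = k"
    using assms lt3 by metis
  then show ?thesis unfolding box_def using assms by blast
qed

lemma in_mm1: "a \<in> Q \<Longrightarrow> a \<in> box (mm a b)"
  by (auto simp: box_def mm_def)
lemma in_mm2: "b \<in> Q \<Longrightarrow> b \<in> box (mm a b)"
  by (auto simp: box_def mm_def)

lemma conn_step: "conn v x y \<Longrightarrow> y \<in> Q - {v} \<Longrightarrow> z \<in> Q - {v} \<Longrightarrow> adj y z \<Longrightarrow> conn v x z"
  unfolding conn_def by (rule rtranclp.rtrancl_into_rtrancl) auto

lemma conn_edge: "x \<in> Q - {v} \<Longrightarrow> y \<in> Q - {v} \<Longrightarrow> adj x y \<Longrightarrow> conn v x y"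
  unfolding conn_def by auto

lemma conn_trans: "conn v x y \<Longrightarrow> conn v y z \<Longrightarrow> conn v x z"
  unfolding conn_def by auto

lemma adj_sym: "adj x y \<Longrightarrow> adj y x"
  unfolding adj_def by (auto simp: insert_commute)

lemma conn_sym: "conn v x y \<Longrightarrow> conn v y x"
  unfolding conn_def
proof (induction rule: rtranclp_induct)
  case base then show ?case by simp
next
  case (step y z)
  then show ?case
    by (metis (mono_tags, lifting) adj_sym converse_rtranclp_into_rtranclp)
qed

lemma exists_less:
  assumes "a \<in> Q" "b \<in> Q" "a \<noteq> b"
  shows "\<exists>l<3. F l b < F l a"
proof (rule ccontr)
  assume "\<not> ?thesis"
  then have h: "\<And>l. l<3 \<Longrightarrow> F l a \<le> F l b" by (meson not_le)
  have "F 0 a \<le> F 0 b" "F 1 a \<le> F 1 b" "F 2 a \<le> F 2 b" using h[of 0] h[of 1] h[of 2] by auto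
  with sum0[of a] sum0[of b] have "F 0 a = F 0 b" by linarith
  with gp[OF assms, of 0] show False by simp
qed

lemma inv:
  assumes ijk: "i<3" "j<3" "k<3" "i\<noteq>j" "i\<noteq>k" "j\<noteq>k"
    and cone: "\<exists>z\<in>Q. z \<noteq> v \<and> F j v \<le> F j z \<and> F k v \<le> F k z"
    and vQ: "v \<in> Q"
  shows "pj \<in> Q \<Longrightarrow> pk \<in> Q \<Longrightarrow> pj \<noteq> v \<Longrightarrow> pk \<noteq> v \<Longrightarrow> F j pj < F j pk \<Longrightarrow> F k pk < F k pj
    \<Longrightarrow> box (mm pj pk) = {pj,pk,v} \<Longrightarrow> F j v < F j pk \<Longrightarrow> F k v < F k pj \<Longrightarrow> conn v pj pk"
proof (induction "card {x\<in>Q. F i x < min (F i pj) (F i pk)}" arbitrary: pj pk rule: less_induct)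
  case (less pj pk)
  note bx = box_ijk[OF ijk]
  note s3 = sum3[OF ijk]
  define c1 where "c1 = min (F i pj) (F i pk)"
  have mj: "mm pj pk j = F j pj" and mk: "mm pj pk k = F k pk" and mi: "mm pj pk i = c1"
    using less.prems by (auto simp: mm_def c1_def)
  have vb: "v \<in> box (mm pj pk)" using less.prems by auto
  then have "c1 \<le> F i v" "F j pj \<le> F j v" "F k pk \<le> F k v"
    using bx mj mk mi by auto
  moreover have "F i v \<noteq> F i pj" "F i v \<noteq> F i pk" "F j pj \<noteq> F j v" "F k pk \<noteq> F k v"
    using gp less.prems vQ ijk by metis+
  ultimately have c1v: "c1 < F i v" and jv: "F j pj < F j v" and kv: "F k pk < F k v"
    unfolding c1_def by auto
  define R where "R = {x\<in>Q. F j pj \<le> F j x \<and> F k pk \<le> F k x \<and> F i x < c1}"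
  obtain z where z: "z \<in> Q" "z \<noteq> v" "F j v \<le> F j z" "F k v \<le> F k z" using cone by blast
  have "z \<notin> box (mm pj pk)"
  proof
    assume "z \<in> box (mm pj pk)"
    then have "z \<in> {pj,pk,v}" using less.prems by auto
    then show False using z jv kv by auto
  qed
  then have "z \<in> R" using z jv kv bx mj mk mi unfolding R_def by auto
  have finR: "finite R" using finQ unfolding R_def by auto
  obtain r where rR: "r \<in> R" and rmax: "\<And>x. x \<in> R \<Longrightarrow> F i x \<le> F i r"
  proof -
    have ne: "F i ` R \<noteq> {}" using \<open>z \<in> R\<close> by auto
    have "Max (F i ` R) \<in> F i ` R" using finR ne by (intro Max_in) auto
    then obtain r where "r \<in> R" "F i r = Max (F i ` R)" by auto
    moreover have "\<And>x. x \<in> R \<Longrightarrow> F i x \<le> Max (F i ` R)" using finR by auto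
    ultimately show ?thesis using that by metis
  qed
  have rQ: "r \<in> Q" and rj: "F j pj \<le> F j r" and rk: "F k pk \<le> F k r" and ri: "F i r < c1"
    using rR unfolding R_def by auto
  have Tstar: "\<And>x. x \<in> Q \<Longrightarrow> F i r \<le> F i x \<Longrightarrow> F j pj \<le> F j x \<Longrightarrow> F k pk \<le> F k x \<Longrightarrow> x \<in> {pj,pk,v,r}"
  proof -
    fix x assume x: "x \<in> Q" "F i r \<le> F i x" "F j pj \<le> F j x" "F k pk \<le> F k x"
    show "x \<in> {pj,pk,v,r}"
    proof (cases "c1 \<le> F i x")
      case True
      then have "x \<in> box (mm pj pk)" using x bx mj mk mi by auto
      then show ?thesis using less.prems by auto
    next
      case False
      then have "x \<in> R" using x unfolding R_def by auto
      then have "F i x = F i r" using rmax x by force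
      then have "x = r" using gp[OF x(1) rQ, of i] ijk by auto
      then show ?thesis by simp
    qed
  qed
  have rv: "r \<noteq> v" using ri c1v by auto
  have rpj: "r \<noteq> pj" and rpk: "r \<noteq> pk" using ri unfolding c1_def by auto
  have rj': "F j pj < F j r" using rj gp[OF less.prems(1) rQ, of j] rpj ijk by fastforce
  have rk': "F k pk < F k r" using rk gp[OF less.prems(2) rQ, of k] rpk ijk by fastforce
  have rjv: "F j r \<noteq> F j v" and rkv: "F k r \<noteq> F k v" using gp rQ vQ rv ijk by metis+
  have sr: "F i r + F j r + F k r = 0" and sv: "F i v + F j v + F k v = 0" using s3 by auto
  have e1: "adj r pj" if kr: "F k v < F k r"
  proof -
    have "box (mm r pj) = {r,pj}"
    proof
      show "box (mm r pj) \<subseteq> {r,pj}"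
      proof
        fix x assume "x \<in> box (mm r pj)"
        then have x: "x \<in> Q" "min (F i r) (F i pj) \<le> F i x" "min (F j r) (F j pj) \<le> F j x"
          "min (F k r) (F k pj) \<le> F k x" using bx unfolding mm_def by auto
        have "min (F i r) (F i pj) = F i r" using ri unfolding c1_def by auto
        moreover have "min (F j r) (F j pj) = F j pj" using rj' by auto
        ultimately have "x \<in> {pj,pk,v,r}" using Tstar[of x] x rk' less.prems(6) by force
        moreover have "x \<noteq> pk" using x rk' less.prems(6) by auto
        moreover have "x \<noteq> v" using x kr less.prems(9) by auto
        ultimately show "x \<in> {r,pj}" by auto
      qed
      show "{r,pj} \<subseteq> box (mm r pj)" using in_mm1 in_mm2 rQ less.prems by auto
    qed
    then show ?thesis unfolding adj_def using rQ less.prems rpj by auto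
  qed
  have e2: "adj r pk" if jr: "F j v < F j r"
  proof -
    have "box (mm r pk) = {r,pk}"
    proof
      show "box (mm r pk) \<subseteq> {r,pk}"
      proof
        fix x assume "x \<in> box (mm r pk)"
        then have x: "x \<in> Q" "min (F i r) (F i pk) \<le> F i x" "min (F j r) (F j pk) \<le> F j x"
          "min (F k r) (F k pk) \<le> F k x" using bx unfolding mm_def by auto
        have "min (F i r) (F i pk) = F i r" using ri unfolding c1_def by auto
        moreover have "min (F k r) (F k pk) = F k pk" using rk' by auto
        ultimately have "x \<in> {pj,pk,v,r}" using Tstar[of x] x rj' less.prems(5) by force
        moreover have "x \<noteq> pj" using x rj' less.prems(5) by auto
        moreover have "x \<noteq> v" using x jr less.prems(8) by auto
        ultimately show "x \<in> {r,pk}" by auto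
      qed
      show "{r,pk} \<subseteq> box (mm r pk)" using in_mm1 in_mm2 rQ less.prems by auto
    qed
    then show ?thesis unfolding adj_def using rQ less.prems rpk by auto
  qed
  have rQv: "r \<in> Q - {v}" "pj \<in> Q - {v}" "pk \<in> Q - {v}" using rQ rv less.prems by auto
  have cardlt: "card {x\<in>Q. F i x < F i r} < card {x\<in>Q. F i x < c1}"
  proof (rule psubset_card_mono)
    show "finite {x\<in>Q. F i x < c1}" using finQ by auto
    show "{x\<in>Q. F i x < F i r} \<subset> {x\<in>Q. F i x < c1}"
      using ri rQ by auto
  qed
  consider (A) "F j v < F j r" "F k v < F k r" | (B) "F j r < F j v" | (C) "F k r < F k v"
    using rjv rkv by linarith
  then show ?case
  proof cases
    case A
    have "conn v pj r" using conn_edge[OF rQv(2) rQv(1) adj_sym[OF e1[OF A(2)]]] .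
    moreover have "conn v r pk" using conn_edge[OF rQv(1) rQv(3) e2[OF A(1)]] .
    ultimately show ?thesis using conn_trans by blast
  next
    case B
    have kr: "F k v < F k r" using B sr sv c1v ri rkv by linarith
    have "conn v r pk"
    proof (rule less.hyps)
      show "card {x \<in> Q. F i x < min (F i r) (F i pk)} < card {x \<in> Q. F i x < min (F i pj) (F i pk)}"
        using cardlt ri unfolding c1_def by (simp add: min_def split: if_splits)
      show "r \<in> Q" "pk \<in> Q" "r \<noteq> v" "pk \<noteq> v" using rQv by auto
      show "F j r < F j pk" using B less.prems by linarith
      show "F k pk < F k r" by (rule rk')
      show "F j v < F j pk" "F k v < F k r" using less.prems kr by auto
      show "box (mm r pk) = {r, pk, v}"
      proof
        show "box (mm r pk) \<subseteq> {r,pk,v}"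
        proof
          fix x assume "x \<in> box (mm r pk)"
          then have x: "x \<in> Q" "min (F i r) (F i pk) \<le> F i x" "min (F j r) (F j pk) \<le> F j x"
            "min (F k r) (F k pk) \<le> F k x" using bx unfolding mm_def by auto
          have "min (F i r) (F i pk) = F i r" using ri unfolding c1_def by auto
          moreover have "min (F k r) (F k pk) = F k pk" using rk' by auto
          moreover have "min (F j r) (F j pk) = F j r" using B less.prems by auto
          ultimately have "x \<in> {pj,pk,v,r}" using Tstar[of x] x rj' by force
          moreover have "x \<noteq> pj" using x rj' B less.prems by auto
          ultimately show "x \<in> {r,pk,v}" by auto
        qed
        have "v \<in> box (mm r pk)" using bx vQ c1v ri B kv unfolding mm_def c1_def by auto
        then show "{r,pk,v} \<subseteq> box (mm r pk)" using in_mm1 in_mm2 rQ less.prems by auto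
      qed
    qed
    moreover have "conn v pj r" using conn_edge[OF rQv(2) rQv(1) adj_sym[OF e1[OF kr]]] .
    ultimately show ?thesis using conn_trans by blast
  next
    case C
    have jr: "F j v < F j r" using C sr sv c1v ri rjv by linarith
    have "conn v pj r"
    proof (rule less.hyps)
      show "card {x \<in> Q. F i x < min (F i pj) (F i r)} < card {x \<in> Q. F i x < min (F i pj) (F i pk)}"
        using cardlt ri unfolding c1_def by (simp add: min_def split: if_splits)
      show "pj \<in> Q" "r \<in> Q" "pj \<noteq> v" "r \<noteq> v" using rQv by auto
      show "F j pj < F j r" by (rule rj')
      show "F k r < F k pj" using C less.prems by linarith
      show "F j v < F j r" "F k v < F k pj" using less.prems jr by auto
      show "box (mm pj r) = {pj, r, v}"
      proof
        show "box (mm pj r) \<subseteq> {pj,r,v}"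
        proof
          fix x assume "x \<in> box (mm pj r)"
          then have x: "x \<in> Q" "min (F i pj) (F i r) \<le> F i x" "min (F j pj) (F j r) \<le> F j x"
            "min (F k pj) (F k r) \<le> F k x" using bx unfolding mm_def by auto
          have "min (F i pj) (F i r) = F i r" using ri unfolding c1_def by auto
          moreover have "min (F j pj) (F j r) = F j pj" using rj' by auto
          moreover have "min (F k pj) (F k r) = F k r" using C less.prems by auto
          ultimately have "x \<in> {pj,pk,v,r}" using Tstar[of x] x rk' by force
          moreover have "x \<noteq> pk" using x rk' C less.prems by auto
          ultimately show "x \<in> {pj,r,v}" by auto
        qed
        have "v \<in> box (mm pj r)" using bx vQ c1v ri C jv unfolding mm_def c1_def by auto
        then show "{pj,r,v} \<subseteq> box (mm pj r)" using in_mm1 in_mm2 rQ less.prems by auto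
      qed
    qed
    moreover have "conn v r pk" using conn_edge[OF rQv(1) rQv(3) e2[OF jr]] .
    ultimately show ?thesis using conn_trans by blast
  qed
qed

lemma bad:
  assumes cones: "\<And>i j. i<3 \<Longrightarrow> j<3 \<Longrightarrow> i\<noteq>j \<Longrightarrow> \<exists>z\<in>Q. z \<noteq> v \<and> F i v \<le> F i z \<and> F j v \<le> F j z"
    and vQ: "v \<in> Q"
    and ab: "a \<in> Q" "b \<in> Q" "a \<noteq> v" "b \<noteq> v"
    and i0j0: "i0 < 3" "j0 < 3" "i0 \<noteq> j0" "F i0 a < F i0 b" "F j0 a < F j0 b"
    and bx: "box (mm a b) = {a,b,v}"
  shows "conn v a b"
proof -
  obtain k where k: "k < 3" "k \<noteq> i0" "k \<noteq> j0"
  proof -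
    have "\<exists>k<3. k \<noteq> i0 \<and> k \<noteq> j0" using i0j0 by presburger
    then show ?thesis using that by blast
  qed
  have s: "F i0 x + F j0 x + F k x = 0" for x using sum3[of i0 j0 k x] i0j0 k by auto
  have vb: "v \<in> box (mm a b)" using bx by auto
  have b3: "x \<in> box c \<longleftrightarrow> x \<in> Q \<and> c i0 \<le> F i0 x \<and> c j0 \<le> F j0 x \<and> c k \<le> F k x" for x c
    using box_ijk[of i0 j0 k] i0j0 k by auto
  have kb: "F k b < F k a" using s[of a] s[of b] i0j0 by linarith
  have "F i0 a \<le> F i0 v" "F j0 a \<le> F j0 v" "F k b \<le> F k v"
    using vb b3 i0j0 kb unfolding mm_def by auto
  moreover have "F i0 a \<noteq> F i0 v" "F j0 a \<noteq> F j0 v" "F k b \<noteq> F k v" "F i0 b \<noteq> F i0 v" "F j0 b \<noteq> F j0 v"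
    using gp ab vQ i0j0 k by metis+
  ultimately have ia: "F i0 a < F i0 v" and ja: "F j0 a < F j0 v" and kbv: "F k b < F k v"
    and ne: "F i0 b \<noteq> F i0 v" "F j0 b \<noteq> F j0 v" by auto
  have kav: "F k v < F k a" using s[of a] s[of v] ia ja by linarith
  have "F j0 v < F j0 b \<or> F i0 v < F i0 b" using s[of b] s[of v] kbv ne by linarith
  then show ?thesis
  proof
    assume h: "F j0 v < F j0 b"
    show ?thesis
      by (rule inv[of i0 j0 k v a b]) (use i0j0 k cones vQ ab kb bx h kav in auto)
  next
    assume h: "F i0 v < F i0 b"
    show ?thesis
      by (rule inv[of j0 i0 k v a b]) (use i0j0 k cones vQ ab kb bx h kav in auto)
  qed
qed

lemma main:
  assumes cones: "\<And>i j. i<3 \<Longrightarrow> j<3 \<Longrightarrow> i\<noteq>j \<Longrightarrow> \<exists>z\<in>Q. z \<noteq> v \<and> F i v \<le> F i z \<and> F j v \<le> F j z"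
    and vQ: "v \<in> Q"
  shows "a \<in> Q - {v} \<Longrightarrow> b \<in> Q - {v} \<Longrightarrow> conn v a b"
proof (induction "card (box (mm a b))" arbitrary: a b rule: less_induct)
  case (less a b)
  show ?case
  proof (cases "a = b")
    case True then show ?thesis unfolding conn_def by simp
  next
    case ab: False
    have sub: "{a,b} \<subseteq> box (mm a b)" using in_mm1 in_mm2 less.prems by auto
    have finb: "finite (box (mm a b))" using finQ unfolding box_def by auto
    show ?thesis
    proof (cases "box (mm a b) \<subseteq> {a,b}")
      case True
      then have "adj a b" using sub ab less.prems unfolding adj_def by blast
      then show ?thesis using conn_edge less.prems by blast
    next
      case nsub: False
      show ?thesis
      proof (cases "\<exists>c\<in>box (mm a b). c \<notin> {a,b,v}")
        case True
        then obtain c where c: "c \<in> box (mm a b)" "c \<noteq> a" "c \<noteq> b" "c \<noteq> v" by auto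
        have cQ: "c \<in> Q" using c unfolding box_def by auto
        have cl: "min (F l a) (F l b) \<le> F l c" if "l < 3" for l
          using c that unfolding box_def mm_def by auto
        have subs: "box (mm a c) \<subseteq> box (mm a b)" "box (mm c b) \<subseteq> box (mm a b)"
          using cl unfolding box_def mm_def by (fastforce simp: min_le_iff_disj)+
        obtain l where l: "l < 3" "F l b < F l a" using exists_less less.prems ab by blast
        have "F l c \<noteq> F l b" using gp cQ less.prems c l by auto
        then have "F l b < F l c" using cl[OF l(1)] l by auto
        then have "b \<notin> box (mm a c)" using l unfolding box_def mm_def by force
        then have "box (mm a c) \<subset> box (mm a b)" using subs sub by auto
        then have c1: "card (box (mm a c)) < card (box (mm a b))" using finb psubset_card_mono by blast
        obtain l' where l': "l' < 3" "F l' a < F l' b" using exists_less[of b a] less.prems ab by auto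
        have "F l' c \<noteq> F l' a" using gp cQ less.prems c l' by auto
        then have "F l' a < F l' c" using cl[OF l'(1)] l' by auto
        then have "a \<notin> box (mm c b)" using l' unfolding box_def mm_def by force
        then have "box (mm c b) \<subset> box (mm a b)" using subs sub by auto
        then have c2: "card (box (mm c b)) < card (box (mm a b))" using finb psubset_card_mono by blast
        have "conn v a c" using less.hyps[OF c1] less.prems cQ c by auto
        moreover have "conn v c b" using less.hyps[OF c2] less.prems cQ c by auto
        ultimately show ?thesis using conn_trans by blast
      next
        case False
        then have bx: "box (mm a b) = {a,b,v}" using sub nsub by auto
        have ne: "\<And>l. l < 3 \<Longrightarrow> F l a \<noteq> F l b" using gp less.prems ab by auto
        have bx': "box (mm b a) = {b,a,v}" using bx unfolding mm_def by (auto simp: min.commute insert_commute)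
        have B1: "conn v a b" if "i0<3" "j0<3" "i0\<noteq>j0" "F i0 a < F i0 b" "F j0 a < F j0 b" for i0 j0
          using bad[OF cones vQ, of a b i0 j0] that less.prems bx by blast
        have B2: "conn v a b" if "i0<3" "j0<3" "i0\<noteq>j0" "F i0 b < F i0 a" "F j0 b < F j0 a" for i0 j0
          using bad[OF cones vQ, of b a i0 j0] that less.prems bx' conn_sym by blast
        have "F 0 a \<noteq> F 0 b" "F 1 a \<noteq> F 1 b" "F 2 a \<noteq> F 2 b" using ne by auto
        then consider "F 0 a < F 0 b" "F 1 a < F 1 b" | "F 0 a < F 0 b" "F 2 a < F 2 b" | "F 1 a < F 1 b" "F 2 a < F 2 b"
          | "F 0 b < F 0 a" "F 1 b < F 1 a" | "F 0 b < F 0 a" "F 2 b < F 2 a" | "F 1 b < F 1 a" "F 2 b < F 2 a"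
          by linarith
        then show ?thesis
        proof cases
          case 1 then show ?thesis using B1[of 0 1] by simp
        next
          case 2 then show ?thesis using B1[of 0 2] by simp
        next
          case 3 then show ?thesis using B1[of 1 2] by simp
        next
          case 4 then show ?thesis using B2[of 0 1] by simp
        next
          case 5 then show ?thesis using B2[of 0 2] by simp
        next
          case 6 then show ?thesis using B2[of 1 2] by simp
        qed
      qed
    qed
  qed
qed

end



lemma all3: "(\<forall>l<(3::nat). P l) \<longleftrightarrow> P 0 \<and> P 1 \<and> P 2"
proof
  assume "P 0 \<and> P 1 \<and> P 2"
  then show "\<forall>l<3. P l" by (metis One_nat_def less_2_cases numeral_2_eq_2 numeral_3_eq_3 less_Suc_eq)
qed auto

definition Fc :: "nat \<Rightarrow> pt \<Rightarrow> real" where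
  "Fc l p = (if l = 0 then snd p + sqrt 3 * fst p else if l = 1 then snd p - sqrt 3 * fst p else -2 * snd p)"

definition Hs :: "(nat \<Rightarrow> real) \<Rightarrow> pt set" where
  "Hs c = {p. \<forall>l<3. c l \<le> Fc l p}"

lemma Fc_simps: "Fc 0 p = snd p + sqrt 3 * fst p" "Fc 1 p = snd p - sqrt 3 * fst p" "Fc 2 p = -2 * snd p"
  by (auto simp: Fc_def)

lemma Fc_sum: "Fc 0 x + Fc 1 x + Fc 2 x = 0" by (simp add: Fc_def)

lemma Fc_lin: "Fc l (x + y) = Fc l x + Fc l y" "Fc l (t *\<^sub>R x) = t * Fc l x"
  by (auto simp: Fc_def algebra_simps)

lemma Fc_gp:
  assumes "general_position P" "x \<in> P" "y \<in> P" "x \<noteq> y" "l < 3"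
  shows "Fc l x \<noteq> Fc l y"
proof -
  have g: "snd y - snd x \<noteq> 0" "snd y - snd x \<noteq> sqrt 3 * (fst y - fst x)" "snd y - snd x \<noteq> - sqrt 3 * (fst y - fst x)"
    using assms unfolding general_position_def by auto
  have "l = 0 \<or> l = 1 \<or> l = 2" using assms(5) by auto
  then show ?thesis using g by (auto simp: Fc_def algebra_simps)
qed

lemma hull_eq:
  fixes a b s :: real
  assumes s: "s > 0"
  shows "convex hull {(a,b), (a - s/2, b + s * sqrt 3 / 2), (a + s/2, b + s * sqrt 3 / 2)} =
    {p. b + sqrt 3 * a \<le> snd p + sqrt 3 * fst p \<and> b - sqrt 3 * a \<le> snd p - sqrt 3 * fst p \<and> snd p \<le> b + s * sqrt 3 / 2}"
    (is "?L = ?R")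
proof
  define r where "r = sqrt 3"
  have r: "r > 0" "r * r = 3" unfolding r_def by auto
  show "?L \<subseteq> ?R"
  proof
    fix p assume "p \<in> ?L"
    then obtain u v w where uvw: "0 \<le> u" "0 \<le> v" "0 \<le> w" "u + v + w = 1"
      and p: "p = u *\<^sub>R (a,b) + v *\<^sub>R (a - s/2, b + s * r / 2) + w *\<^sub>R (a + s/2, b + s * r / 2)"
      unfolding convex_hull_3 r_def by auto
    have u: "u = 1 - v - w" using uvw by simp
    have fx: "fst p = a + (w - v) * (s/2)" using p u by (simp add: field_simps)
    have fy: "snd p = b + (v + w) * (s * r / 2)" using p u by (simp add: algebra_simps)
    have e0: "snd p + r * fst p - (b + r * a) = r * s * w"
      unfolding fx fy by (simp add: field_simps)
    have e1: "snd p - r * fst p - (b - r * a) = r * s * v"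
      unfolding fx fy by (simp add: field_simps)
    have "0 \<le> r * s * w" "0 \<le> r * s * v" using r s uvw by auto
    moreover have "(v + w) * (s * r / 2) \<le> 1 * (s * r / 2)"
      using uvw r s by (intro mult_right_mono) auto
    ultimately show "p \<in> ?R" using e0 e1 fy unfolding r_def[symmetric] by auto
  qed
  show "?R \<subseteq> ?L"
  proof
    fix p assume "p \<in> ?R"
    then obtain x y where p: "p = (x,y)" and h: "b + r * a \<le> y + r * x" "b - r * a \<le> y - r * x" "y \<le> b + s * r / 2"
      unfolding r_def by (cases p) auto
    define v where "v = ((y - b) - r * (x - a)) / (r * s)"
    define w where "w = ((y - b) + r * (x - a)) / (r * s)"
    define u where "u = 1 - v - w"
    have rs: "r * s > 0" using r s by auto
    have v0: "0 \<le> v" unfolding v_def using h rs by (intro divide_nonneg_pos) (auto simp: algebra_simps)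
    have w0: "0 \<le> w" unfolding w_def using h rs by (intro divide_nonneg_pos) (auto simp: algebra_simps)
    have vw: "v + w = 2 * (y - b) / (r * s)" unfolding v_def w_def add_divide_distrib[symmetric] by (simp add: algebra_simps)
    have "2 * (y - b) \<le> 1 * (r * s)" using h by (simp add: algebra_simps)
    then have "2 * (y - b) / (r * s) \<le> 1" using rs by (simp add: divide_le_eq)
    then have u0: "0 \<le> u" unfolding u_def using vw by simp
    have wv: "w - v = 2 * (x - a) / s" unfolding v_def w_def using r s by (simp add: field_simps)
    have "u *\<^sub>R (a,b) + v *\<^sub>R (a - s/2, b + s * r / 2) + w *\<^sub>R (a + s/2, b + s * r / 2)
        = (a + (w - v) * (s/2), b + (v + w) * (s * r / 2))"
      unfolding u_def by (simp add: field_simps)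
    also have "\<dots> = (x, y)" unfolding wv vw using r s by (simp add: field_simps)
    finally have pe: "p = u *\<^sub>R (a,b) + v *\<^sub>R (a - s/2, b + s * r / 2) + w *\<^sub>R (a + s/2, b + s * r / 2)"
      using p by simp
    have "u + v + w = 1" unfolding u_def by simp
    then show "p \<in> ?L" unfolding convex_hull_3 r_def[symmetric] using u0 v0 w0 pe by blast
  qed
qed

lemma dt_Hs:
  assumes "down_triangle T"
  shows "\<exists>c. T = Hs c"
proof -
  obtain a b s where s: "s > 0" and T: "T = convex hull {(a, b), (a - s/2, b + s * sqrt 3 / 2), (a + s/2, b + s * sqrt 3 / 2)}"
    using assms unfolding down_triangle_def by auto
  define c where "c = (\<lambda>l::nat. if l = 0 then b + sqrt 3 * a else if l = 1 then b - sqrt 3 * a else -2*b - sqrt 3 * s)"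
  have "T = Hs c"
    unfolding T hull_eq[OF s] Hs_def all3 c_def Fc_simps by (auto simp: algebra_simps)
  then show ?thesis by blast
qed

lemma Hs_dt:
  assumes "c 0 + c 1 + c 2 < 0"
  shows "down_triangle (Hs c)"
proof -
  define r where "r = sqrt 3"
  have r: "r > 0" "r * r = 3" unfolding r_def by auto
  define a where "a = (c 0 - c 1) / (2 * r)"
  define b where "b = (c 0 + c 1) / 2"
  define s where "s = - (c 0 + c 1 + c 2) / r"
  have s: "s > 0" unfolding s_def using assms r by (auto intro: divide_pos_pos)
  have ra: "r * a = (c 0 - c 1) / 2" unfolding a_def using r by (simp add: field_simps)
  have sr: "s * r = - (c 0 + c 1 + c 2)" unfolding s_def using r by (simp add: field_simps)
  have E0: "b + sqrt 3 * a = c 0" using ra unfolding r_def b_def by (simp add: field_simps; linarith)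
  have E1: "b - sqrt 3 * a = c 1" using ra unfolding r_def b_def by (simp add: field_simps; linarith)
  have E2: "b + s * sqrt 3 / 2 = - c 2 / 2" using sr unfolding r_def b_def by (simp add: field_simps; linarith)
  have "Hs c = convex hull {(a, b), (a - s/2, b + s * sqrt 3 / 2), (a + s/2, b + s * sqrt 3 / 2)}"
    unfolding hull_eq[OF s] unfolding E0 E1 E2 Hs_def all3 Fc_simps by auto
  then show ?thesis unfolding down_triangle_def using s by blast
qed




lemma tri_adj_box:
  assumes gp: "general_position P"
  shows "tri_adj P p q \<longleftrightarrow> p \<in> P \<and> q \<in> P \<and> p \<noteq> q \<and> (\<exists>c. {x\<in>P. \<forall>l<3. c l \<le> Fc l x} = {p,q})"
proof
  assume "tri_adj P p q"
  then obtain T where pq: "p \<in> P" "q \<in> P" "p \<noteq> q" and T: "down_triangle T" "T \<inter> P = {p,q}"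
    unfolding tri_adj_def by auto
  obtain c where "T = Hs c" using dt_Hs[OF T(1)] by blast
  then have "{x\<in>P. \<forall>l<3. c l \<le> Fc l x} = {p,q}" using T(2) unfolding Hs_def by auto
  then show "p \<in> P \<and> q \<in> P \<and> p \<noteq> q \<and> (\<exists>c. {x\<in>P. \<forall>l<3. c l \<le> Fc l x} = {p,q})" using pq by blast
next
  assume "p \<in> P \<and> q \<in> P \<and> p \<noteq> q \<and> (\<exists>c. {x\<in>P. \<forall>l<3. c l \<le> Fc l x} = {p,q})"
  then obtain c where pq: "p \<in> P" "q \<in> P" "p \<noteq> q" and c: "{x\<in>P. \<forall>l<3. c l \<le> Fc l x} = {p,q}" by blast
  have cp: "c 0 \<le> Fc 0 p" "c 1 \<le> Fc 1 p" "c 2 \<le> Fc 2 p" using c by (auto simp: all3)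
  have cq: "c 0 \<le> Fc 0 q" "c 1 \<le> Fc 1 q" "c 2 \<le> Fc 2 q" using c by (auto simp: all3)
  have "c 0 + c 1 + c 2 < 0"
  proof (rule ccontr)
    assume "\<not> ?thesis"
    then have "Fc 0 p = c 0" "Fc 0 q = c 0" using cp cq Fc_sum[of p] Fc_sum[of q] by linarith+
    then show False using Fc_gp[OF gp pq, of 0] by simp
  qed
  then have "down_triangle (Hs c)" by (rule Hs_dt)
  moreover have "Hs c \<inter> P = {p,q}" using c unfolding Hs_def by auto
  ultimately show "tri_adj P p q" unfolding tri_adj_def using pq by blast
qed

definition Dk :: "nat \<Rightarrow> pt" where
  "Dk k = (if k = 0 then (- sqrt 3, -1) else if k = 1 then (sqrt 3, -1) else (0, 2))"

lemma Fc_Dk: "l < 3 \<Longrightarrow> k < 3 \<Longrightarrow> Fc l (Dk k) = (if l = k then -4 else 2)"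
proof -
  assume "l < 3" "k < 3"
  then have "l = 0 \<or> l = 1 \<or> l = 2" "k = 0 \<or> k = 1 \<or> k = 2" by auto
  then show ?thesis by (auto simp: Fc_def Dk_def)
qed

lemma conv_gt: "0 \<le> (u::real) \<Longrightarrow> u \<le> 1 \<Longrightarrow> x < (1-u)*a + u*b \<Longrightarrow> x < a \<or> x < b"
proof (rule ccontr)
  assume h: "0 \<le> u" "u \<le> 1" "x < (1-u)*a + u*b" "\<not> (x < a \<or> x < b)"
  then have "(1-u)*a \<le> (1-u)*x" "u*b \<le> u*x" by (auto intro: mult_left_mono)
  then show False using h by (simp add: algebra_simps)
qed

lemma conv_ge: "0 \<le> (u::real) \<Longrightarrow> u \<le> 1 \<Longrightarrow> c \<le> a \<Longrightarrow> c \<le> b \<Longrightarrow> c \<le> (1-u)*a + u*b"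
proof -
  assume h: "0 \<le> u" "u \<le> 1" "c \<le> a" "c \<le> b"
  then have "(1-u)*c \<le> (1-u)*a" "u*c \<le> u*b" by (auto intro: mult_left_mono)
  then show ?thesis by (simp add: algebra_simps)
qed




lemma escape:
  assumes gp: "general_position P" and vP: "v \<in> P"
    and ijk: "i<3" "j<3" "k<3" "i\<noteq>j" "i\<noteq>k" "j\<noteq>k"
    and cone: "\<And>z. z \<in> P \<Longrightarrow> Fc i v \<le> Fc i z \<Longrightarrow> Fc j v \<le> Fc j z \<Longrightarrow> z = v"
    and t: "t > 0"
  shows "v + t *\<^sub>R Dk k \<notin> tri_drawing P"
proof
  define w where "w = v + t *\<^sub>R Dk k"
  have Fw: "Fc l w = Fc l v + t * (if l = k then -4 else 2)" if "l < 3" for l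
    unfolding w_def using that ijk by (simp add: Fc_lin Fc_Dk)
  have wi: "Fc i w = Fc i v + 2 * t" and wj: "Fc j w = Fc j v + 2 * t" and wk: "Fc k w = Fc k v - 4 * t"
    using Fw ijk by auto
  have l3: "\<And>l. l < 3 \<Longrightarrow> l = i \<or> l = j \<or> l = k" using ijk by auto
  assume "v + t *\<^sub>R Dk k \<in> tri_drawing P"
  then have "w \<in> P \<or> (\<exists>p q. tri_adj P p q \<and> w \<in> closed_segment p q)"
    unfolding tri_drawing_def w_def by auto
  then show False
  proof
    assume "w \<in> P"
    then have "w = v" using cone wi wj t by auto
    then show False using wi t by auto
  next
    assume "\<exists>p q. tri_adj P p q \<and> w \<in> closed_segment p q"
    then obtain p q where pq: "tri_adj P p q" and ws: "w \<in> closed_segment p q" by blast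
    obtain u where u: "0 \<le> u" "u \<le> 1" and wu: "w = (1 - u) *\<^sub>R p + u *\<^sub>R q"
      using ws unfolding closed_segment_def by auto
    have FL: "Fc l w = (1-u) * Fc l p + u * Fc l q" for l unfolding wu by (simp add: Fc_lin)
    obtain c where pP: "p \<in> P" and qP: "q \<in> P" and pnq: "p \<noteq> q"
      and c: "{x\<in>P. \<forall>l<3. c l \<le> Fc l x} = {p,q}"
      using pq tri_adj_box[OF gp] by blast
    have cp: "\<And>l. l<3 \<Longrightarrow> c l \<le> Fc l p" and cq: "\<And>l. l<3 \<Longrightarrow> c l \<le> Fc l q" using c by auto
    have Ai: "Fc i v < Fc i p \<or> Fc i v < Fc i q" using conv_gt[OF u, of "Fc i v"] FL[of i] wi t by auto
    have Aj: "Fc j v < Fc j p \<or> Fc j v < Fc j q" using conv_gt[OF u, of "Fc j v"] FL[of j] wj t by auto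
    have np: "p \<noteq> v \<Longrightarrow> Fc i p < Fc i v \<or> Fc j p < Fc j v" using cone[OF pP] by force
    have nq: "q \<noteq> v \<Longrightarrow> Fc i q < Fc i v \<or> Fc j q < Fc j v" using cone[OF qP] by force
    show False
    proof (cases "p = v \<or> q = v")
      case True
      then show False using np nq Ai Aj pnq by auto
    next
      case False
      then have h1: "Fc i p < Fc i v \<or> Fc j p < Fc j v" and h2: "Fc i q < Fc i v \<or> Fc j q < Fc j v"
        using np nq by auto
      have ci: "c i \<le> Fc i v"
        using h1 h2 Ai Aj cp[OF ijk(1)] cq[OF ijk(1)] by linarith
      have cj: "c j \<le> Fc j v"
        using h1 h2 Ai Aj cp[OF ijk(2)] cq[OF ijk(2)] by linarith
      have "c k \<le> Fc k w" unfolding FL by (rule conv_ge[OF u cp[OF ijk(3)] cq[OF ijk(3)]])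
      then have ck: "c k \<le> Fc k v" using wk t by linarith
      have "\<forall>l<3. c l \<le> Fc l v" using ci cj ck l3 by blast
      then have "v \<in> {p,q}" using c vP by blast
      then show False using False by auto
    qed
  qed
qed




lemma frontier_escape:
  fixes S :: "'a::real_normed_vector set"
  assumes vS: "v \<in> S" and d: "d \<noteq> 0" and esc: "\<And>t. t > 0 \<Longrightarrow> v + t *\<^sub>R d \<notin> S"
  shows "v \<in> frontier (outside S)"
proof -
  have nd: "norm d > 0" using d by auto
  have out: "v + t *\<^sub>R d \<in> outside S" if t: "t > 0" for t
  proof -
    let ?L = "(\<lambda>s. v + s *\<^sub>R d) ` {0<..}"
    have conn: "connected ?L"
    proof -
      have "continuous_on {0<..} (\<lambda>s. v + s *\<^sub>R d)" by (intro continuous_intros)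
      then show ?thesis using connected_continuous_image connected_Ioi by blast
    qed
    have Lsub: "?L \<subseteq> -S" using esc by force
    have wL: "v + t *\<^sub>R d \<in> ?L" using t by auto
    have sub: "?L \<subseteq> connected_component_set (-S) (v + t *\<^sub>R d)"
      by (rule connected_component_maximal[OF wL conn Lsub])
    have "\<not> bounded ?L"
    proof
      assume "bounded ?L"
      then obtain B where B: "\<forall>x\<in>?L. norm x \<le> B" by (auto simp: bounded_iff)
      define s where "s = (\<bar>B\<bar> + norm v + 1) / norm d"
      have "\<bar>B\<bar> + norm v + 1 > 0" by (simp add: add_nonneg_pos)
      then have s: "s > 0" unfolding s_def using nd by (simp add: divide_pos_pos)
      have "norm (s *\<^sub>R d) = s * norm d" using s by simp
      then have ns: "norm (s *\<^sub>R d) = \<bar>B\<bar> + norm v + 1" unfolding s_def using nd by simp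
      have "norm (s *\<^sub>R d) \<le> norm (v + s *\<^sub>R d) + norm v"
        using norm_triangle_ineq4[of "v + s *\<^sub>R d" v] by simp
      moreover have "norm (v + s *\<^sub>R d) \<le> B" using B s by auto
      ultimately show False using ns by linarith
    qed
    then have "\<not> bounded (connected_component_set (-S) (v + t *\<^sub>R d))"
      using sub bounded_subset by blast
    then show ?thesis by (simp add: outside)
  qed
  have "v \<in> closure (outside S)"
    unfolding closure_approachable
  proof (intro allI impI)
    fix e :: real assume e: "e > 0"
    define t where "t = e / (2 * norm d)"
    have t: "t > 0" unfolding t_def using e nd by auto
    have "dist (v + t *\<^sub>R d) v = t * norm d" using t by (simp add: dist_norm)
    also have "\<dots> = e / 2" unfolding t_def using nd by simp
    finally have "dist (v + t *\<^sub>R d) v < e" using e by simp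
    then show "\<exists>y\<in>outside S. dist y v < e" using out[OF t] by blast
  qed
  moreover have "v \<notin> interior (outside S)"
    using vS interior_subset outside_no_overlap by blast
  ultimately show ?thesis unfolding frontier_def by blast
qed




theorem corollary1:
  fixes P :: "(real \<times> real) set" and v :: "real \<times> real"
  assumes "finite P" and "general_position P"
    and "cut_vertex (tri_adj P) P v"
  shows "v \<in> frontier (outer_face P)"
proof -
  interpret T: tg P Fc
    using assms(1) Fc_sum Fc_gp[OF assms(2)] by unfold_locales auto
  have adjeq: "tri_adj P = T.adj"
    by (auto simp: fun_eq_iff tri_adj_box[OF assms(2)] T.adj_def T.box_def)
  have vP: "v \<in> P" and gt: "num_components (tri_adj P) P < num_components (tri_adj P) (P - {v})"
    using assms(3) unfolding cut_vertex_def by auto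
  have "\<exists>i j. i<3 \<and> j<3 \<and> i\<noteq>j \<and> \<not>(\<exists>z\<in>P. z \<noteq> v \<and> Fc i v \<le> Fc i z \<and> Fc j v \<le> Fc j z)"
  proof (rule ccontr)
    assume "\<not> ?thesis"
    then have cones: "\<And>i j. i<3 \<Longrightarrow> j<3 \<Longrightarrow> i\<noteq>j \<Longrightarrow> \<exists>z\<in>P. z \<noteq> v \<and> Fc i v \<le> Fc i z \<and> Fc j v \<le> Fc j z"
      by blast
    have all: "reach (tri_adj P) (P - {v}) a b" if "a \<in> P - {v}" "b \<in> P - {v}" for a b
      using T.main[OF cones vP that] unfolding reach_def T.conn_def adjeq .
    have "(\<lambda>u. {w \<in> P - {v}. reach (tri_adj P) (P - {v}) u w}) ` (P - {v}) \<subseteq> {P - {v}}"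
      using all by auto
    then have "num_components (tri_adj P) (P - {v}) \<le> card {P - {v}}"
      unfolding num_components_def by (intro card_mono) auto
    then have le1: "num_components (tri_adj P) (P - {v}) \<le> 1" by simp
    have "num_components (tri_adj P) P > 0"
      unfolding num_components_def using assms(1) vP by (auto simp: card_gt_0_iff)
    then show False using gt le1 by linarith
  qed
  then obtain i j where ij: "i<3" "j<3" "i\<noteq>j"
    and cone0: "\<not>(\<exists>z\<in>P. z \<noteq> v \<and> Fc i v \<le> Fc i z \<and> Fc j v \<le> Fc j z)" by blast
  obtain k where k: "k < 3" "k \<noteq> i" "k \<noteq> j"
  proof -
    have "\<exists>k<3. k \<noteq> i \<and> k \<noteq> j" using ij by presburger
    then show ?thesis using that by blast
  qed
  have cone: "\<And>z. z \<in> P \<Longrightarrow> Fc i v \<le> Fc i z \<Longrightarrow> Fc j v \<le> Fc j z \<Longrightarrow> z = v" using cone0 by blast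
  have esc: "\<And>t. t > 0 \<Longrightarrow> v + t *\<^sub>R Dk k \<notin> tri_drawing P"
    using escape[OF assms(2) vP ij(1,2) k(1) ij(3) k(2)[symmetric] k(3)[symmetric] cone] by blast
  have "Fc k (Dk k) = -4" using Fc_Dk[OF k(1) k(1)] by simp
  moreover have "Fc k 0 = 0" by (simp add: Fc_def)
  ultimately have d: "Dk k \<noteq> 0" by auto
  have "v \<in> tri_drawing P" using vP unfolding tri_drawing_def by auto
  then show ?thesis unfolding outer_face_def using frontier_escape[OF _ d esc] by blast
qed


end
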